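(* Let $\hat N$ be any population size estimator which is consistent for the model consisting of all probability vectors $(p_x)_{x\in\{0,1\}^L}$ with all $p_x>0$ and $\gamma=0$ (no full-way interaction). Then for any probability vector $(p_x)_{x\in\{0,1\}^L}$ with all $p_x>0$ (with $\gamma$ not necessarily zero), the asymptotic relative bias of $\hat N$ exists and equals $$\lim_{N\to\infty}\frac{\hat N - N}{N} = p_{\mathbf{0}}\,(e^{\gamma}-1)\quad\text{almost surely}.$$
   Context: Multiple systems estimation setting with $L\ge 2$ lists: individuals $i=1,2,3,\dots$ have independent, identically distributed list inclusion patterns $W_i\in\{0,1\}^L$ with $\mathbb{P}(W_i=x)=p_x>0$ for every $x\in\{0,1\}^L$; $\mathbf{0}=(0,\dots,0)$ denotes non-observation. For population size $N$, the observed counts are $n_x^{(N)}=\#\{i\le N: W_i=x\}$, $x\neq\mathbf{0}$. A population size estimator $\hat N$ is a function of the observed counts; it is consistent for a model (set of probability vectors) if $\hat N\big((n_x^{(N)})_{x\ne\mathbf{0}}\big)/N\to1$ almost surely as $N\to\infty$ whenever $(p_x)$ belongs to the model. The full-way interaction term is $\gamma=\sum_{x\in\{0,1\}^L}(-1)^{|x|+1}\log p_x$, where $|x|=\sum_i x_i$. The asymptotic relative bias is $\lim_{N\to\infty}(\hat N-N)/N$ when this limit exists and is almost surely constant. *)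

theory Defs
  imports "HOL-Probability.Probability"
begin

definition patterns :: "nat \<Rightarrow> bool list set" where
  "patterns L = {xs. length xs = L}"

definition zero_pattern :: "nat \<Rightarrow> bool list" where
  "zero_pattern L = replicate L False"

text \<open>|x| = number of lists containing the individual.\<close>
definition pat_weight :: "bool list \<Rightarrow> nat" where
  "pat_weight x = length (filter id x)"

definition full_interaction :: "nat \<Rightarrow> bool list pmf \<Rightarrow> real" where
  "full_interaction L Q =
     (\<Sum>x\<in>patterns L. (-1) ^ (pat_weight x + 1) * ln (pmf Q x))"

text \<open>Law of the i.i.d. sequence W_1, W_2, ... (indexed from 0).\<close>
definition iid_patterns :: "bool list pmf \<Rightarrow> (nat \<Rightarrow> bool list) measure" where
  "iid_patterns Q = PiM UNIV (\<lambda>_::nat. measure_pmf Q)"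

text \<open>Observed counts n_x^(N) for x \<noteq> 0 (set to 0 at unobservable / invalid indices,
  so an estimator applied to them is a function of the observed counts only).\<close>
definition obs_counts :: "nat \<Rightarrow> (nat \<Rightarrow> bool list) \<Rightarrow> nat \<Rightarrow> bool list \<Rightarrow> nat" where
  "obs_counts L \<omega> N x =
     (if x \<in> patterns L \<and> x \<noteq> zero_pattern L then card {i. i < N \<and> \<omega> i = x} else 0)"

text \<open>Model: probability vectors over {0,1}^L with all entries positive.\<close>
definition positive_model :: "nat \<Rightarrow> bool list pmf \<Rightarrow> bool" where
  "positive_model L Q \<longleftrightarrow> set_pmf Q = patterns L"

definition consistent_for :: "nat \<Rightarrow> ((bool list \<Rightarrow> nat) \<Rightarrow> real) \<Rightarrow> (bool list pmf \<Rightarrow> bool) \<Rightarrow> bool" where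
  "consistent_for L Nhat model \<longleftrightarrow>
     (\<forall>Q. model Q \<longrightarrow>
        (AE \<omega> in iid_patterns Q. (\<lambda>N. Nhat (obs_counts L \<omega> N) / real N) \<longlonglongrightarrow> 1))"

end

theory Submission
  imports Defs
begin


definition cntO :: "('a \<Rightarrow> bool) \<Rightarrow> (nat \<Rightarrow> 'a) \<Rightarrow> nat \<Rightarrow> nat" where
  "cntO ob \<omega> n = (\<Sum>i<n. if ob (\<omega> i) then 1 else 0)"

definition posn :: "('a \<Rightarrow> bool) \<Rightarrow> (nat \<Rightarrow> 'a) \<Rightarrow> nat \<Rightarrow> nat \<Rightarrow> bool" where
  "posn ob \<omega> k n \<longleftrightarrow> ob (\<omega> n) \<and> cntO ob \<omega> n = k"

definition Yseq :: "('a \<Rightarrow> bool) \<Rightarrow> (nat \<Rightarrow> 'a) \<Rightarrow> nat \<Rightarrow> 'a" where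
  "Yseq ob \<omega> k = (if \<exists>n. posn ob \<omega> k n then \<omega> (THE n. posn ob \<omega> k n) else undefined)"

lemma cntO_0 [simp]: "cntO ob \<omega> 0 = 0"
  by (simp add: cntO_def)

lemma cntO_Suc: "cntO ob \<omega> (Suc n) = cntO ob \<omega> n + (if ob (\<omega> n) then 1 else 0)"
  by (simp add: cntO_def)

lemma cntO_mono: "m \<le> n \<Longrightarrow> cntO ob \<omega> m \<le> cntO ob \<omega> n"
  unfolding cntO_def by (intro sum_mono2) auto

lemma cntO_le: "cntO ob \<omega> n \<le> n"
proof (induction n)
  case (Suc n) then show ?case by (simp add: cntO_Suc)
qed simp

lemma posn_unique: "posn ob \<omega> k n \<Longrightarrow> posn ob \<omega> k m \<Longrightarrow> n = m"
proof (rule ccontr)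
  assume a: "posn ob \<omega> k n" "posn ob \<omega> k m" "n \<noteq> m"
  have *: "\<And>n m. posn ob \<omega> k n \<Longrightarrow> posn ob \<omega> k m \<Longrightarrow> n < m \<Longrightarrow> False"
  proof -
    fix n m assume b: "posn ob \<omega> k n" "posn ob \<omega> k m" "n < m"
    have "cntO ob \<omega> (Suc n) \<le> cntO ob \<omega> m" using b(3) by (intro cntO_mono) auto
    then show False using b by (simp add: posn_def cntO_Suc)
  qed
  show False using a *[of n m] *[of m n] by linarith
qed

lemma Yseq_eqI: "posn ob \<omega> k n \<Longrightarrow> Yseq ob \<omega> k = \<omega> n"
  unfolding Yseq_def using posn_unique
  by (metis (mono_tags, lifting) the_equality)

lemma cntO_case_nat: "cntO ob (case_nat x \<omega>) (Suc n) = (if ob x then 1 else 0) + cntO ob \<omega> n"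
  unfolding cntO_def by (subst sum.lessThan_Suc_shift) simp

lemma posn_case_nat_0: "posn ob (case_nat x \<omega>) k 0 \<longleftrightarrow> ob x \<and> k = 0"
  by (auto simp: posn_def)

lemma posn_case_nat_Suc:
  "posn ob (case_nat x \<omega>) k (Suc n) \<longleftrightarrow> ob (\<omega> n) \<and> (if ob x then 1 else 0) + cntO ob \<omega> n = k"
  by (simp add: posn_def cntO_case_nat)

lemma Yseq_shift:
  assumes "\<And>n. posn ob \<omega>' k n \<longleftrightarrow> (\<exists>n'. n = Suc n' \<and> posn ob \<omega> k' n')"
    and "\<And>n. \<omega>' (Suc n) = \<omega> n"
  shows "Yseq ob \<omega>' k = Yseq ob \<omega> k'"
proof (cases "\<exists>n. posn ob \<omega> k' n")
  case True
  then obtain n where n: "posn ob \<omega> k' n" by blast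
  then have "posn ob \<omega>' k (Suc n)" using assms by blast
  then have "Yseq ob \<omega>' k = \<omega>' (Suc n)" by (rule Yseq_eqI)
  moreover have "Yseq ob \<omega> k' = \<omega> n" using n by (rule Yseq_eqI)
  ultimately show ?thesis using assms(2) by simp
next
  case False
  then have "\<not> (\<exists>n. posn ob \<omega>' k n)" using assms by blast
  then show ?thesis using False by (simp add: Yseq_def)
qed

lemma Yseq_case_nat:
  "Yseq ob (case_nat x \<omega>) = (if ob x then case_nat x (Yseq ob \<omega>) else Yseq ob \<omega>)"
proof (rule ext)
  fix k
  show "Yseq ob (case_nat x \<omega>) k = (if ob x then case_nat x (Yseq ob \<omega>) else Yseq ob \<omega>) k"
  proof (cases "ob x")
    case True
    show ?thesis
    proof (cases k)
      case 0
      have "posn ob (case_nat x \<omega>) 0 0" using True by (simp add: posn_case_nat_0)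
      then show ?thesis using True 0 by (simp add: Yseq_eqI)
    next
      case (Suc k')
      have "Yseq ob (case_nat x \<omega>) k = Yseq ob \<omega> k'"
      proof (rule Yseq_shift)
        fix n show "posn ob (case_nat x \<omega>) k n = (\<exists>n'. n = Suc n' \<and> posn ob \<omega> k' n')"
          using True Suc by (cases n) (auto simp: posn_def cntO_case_nat)
      qed simp
      then show ?thesis using True Suc by simp
    qed
  next
    case False
    have "Yseq ob (case_nat x \<omega>) k = Yseq ob \<omega> k"
    proof (rule Yseq_shift)
      fix n show "posn ob (case_nat x \<omega>) k n = (\<exists>n'. n = Suc n' \<and> posn ob \<omega> k n')"
        using False by (cases n) (auto simp: posn_def cntO_case_nat)
    qed simp
    then show ?thesis using False by simp
  qed
qed

lemma filter_map_Yseq: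
  "filter ob (map \<omega> [0..<N]) = map (Yseq ob \<omega>) [0..<cntO ob \<omega> N]"
proof (induction N)
  case (Suc N)
  show ?case
  proof (cases "ob (\<omega> N)")
    case True
    have "posn ob \<omega> (cntO ob \<omega> N) N" using True by (simp add: posn_def)
    then have "Yseq ob \<omega> (cntO ob \<omega> N) = \<omega> N" by (rule Yseq_eqI)
    then show ?thesis using Suc True by (simp add: cntO_Suc)
  next
    case False
    then show ?thesis using Suc by (simp add: cntO_Suc)
  qed
qed simp



lemma comp_meas_pmf:
  "(\<lambda>\<omega>. \<omega> i) \<in> PiM UNIV (\<lambda>_::nat. measure_pmf (P::'a pmf)) \<rightarrow>\<^sub>M count_space UNIV"
proof -
  have "(\<lambda>\<omega>. \<omega> i) \<in> PiM UNIV (\<lambda>_::nat. measure_pmf P) \<rightarrow>\<^sub>M measure_pmf P"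
    by (rule measurable_component_singleton) simp
  then show ?thesis by (simp add: measurable_cong_sets[OF refl sets_measure_pmf_count_space])
qed

lemma prefix_meas:
  "(\<lambda>\<omega>. map \<omega> [0..<n]) \<in> PiM UNIV (\<lambda>_::nat. measure_pmf (P::'a::countable pmf)) \<rightarrow>\<^sub>M count_space UNIV"
proof (induction n)
  case 0
  then show ?case by simp
next
  case (Suc n)
  have "(\<lambda>\<omega>. (map \<omega> [0..<n], \<omega> n)) \<in> PiM UNIV (\<lambda>_::nat. measure_pmf P) \<rightarrow>\<^sub>M
          count_space UNIV \<Otimes>\<^sub>M count_space UNIV"
    using Suc comp_meas_pmf by (intro measurable_Pair) auto
  then have "(\<lambda>\<omega>. (map \<omega> [0..<n], \<omega> n)) \<in> PiM UNIV (\<lambda>_::nat. measure_pmf P) \<rightarrow>\<^sub>M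
          count_space (UNIV :: ('a list \<times> 'a) set)"
    by (simp add: pair_measure_countable)
  then have "(\<lambda>p. fst p @ [snd p]) \<circ> (\<lambda>\<omega>. (map \<omega> [0..<n], \<omega> n)) \<in> PiM UNIV (\<lambda>_::nat. measure_pmf P) \<rightarrow>\<^sub>M
          count_space UNIV"
    by (rule measurable_comp) simp
  then show ?case by (simp add: o_def)
qed

lemma prefix_fun_meas:
  assumes "space N = UNIV"
  shows "(\<lambda>\<omega>. f (map \<omega> [0..<n])) \<in> PiM UNIV (\<lambda>_::nat. measure_pmf (P::'a::countable pmf)) \<rightarrow>\<^sub>M N"
proof -
  have "f \<in> count_space UNIV \<rightarrow>\<^sub>M N" using assms by (simp add: measurable_count_space_eq1)
  from measurable_comp[OF prefix_meas this] show ?thesis by (simp add: o_def)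
qed

lemma posn_prefix:
  "posn ob \<omega> k n \<longleftrightarrow>
    (\<lambda>xs. ob (xs ! n) \<and> (\<Sum>i<n. if ob (xs ! i) then 1 else 0) = k) (map \<omega> [0..<Suc n])"
  by (simp add: posn_def cntO_def del: upt_Suc)

lemma posn_meas [measurable]:
  "Measurable.pred (PiM UNIV (\<lambda>_::nat. measure_pmf (P::'a::countable pmf))) (\<lambda>\<omega>. posn ob \<omega> k n)"
  unfolding posn_prefix by (rule prefix_fun_meas) simp

lemma comp_eq_meas [measurable]:
  "Measurable.pred (PiM UNIV (\<lambda>_::nat. measure_pmf (P::'a::countable pmf))) (\<lambda>\<omega>. \<omega> n = x)"
proof -
  have "Measurable.pred (PiM UNIV (\<lambda>_::nat. measure_pmf P)) (\<lambda>\<omega>. (\<lambda>xs. xs ! n = x) (map \<omega> [0..<Suc n]))"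
    by (rule prefix_fun_meas) simp
  then show ?thesis by (simp del: upt_Suc)
qed

lemma Yseq_comp_meas:
  "(\<lambda>\<omega>. Yseq ob \<omega> k) \<in> PiM UNIV (\<lambda>_::nat. measure_pmf (P::'a::countable pmf)) \<rightarrow>\<^sub>M count_space UNIV"
proof (subst measurable_count_space_eq2_countable, safe)
  fix x
  have "(\<lambda>\<omega>. Yseq ob \<omega> k) -` {x} \<inter> space (PiM UNIV (\<lambda>_::nat. measure_pmf P)) =
        {\<omega> \<in> space (PiM UNIV (\<lambda>_::nat. measure_pmf P)).
           (\<exists>n. posn ob \<omega> k n \<and> \<omega> n = x) \<or> ((\<forall>n. \<not> posn ob \<omega> k n) \<and> undefined = x)}"
  proof (intro set_eqI iffI)
    fix \<omega> assume "\<omega> \<in> (\<lambda>\<omega>. Yseq ob \<omega> k) -` {x} \<inter> space (PiM UNIV (\<lambda>_::nat. measure_pmf P))"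
    then show "\<omega> \<in> {\<omega> \<in> space (PiM UNIV (\<lambda>_::nat. measure_pmf P)).
           (\<exists>n. posn ob \<omega> k n \<and> \<omega> n = x) \<or> ((\<forall>n. \<not> posn ob \<omega> k n) \<and> undefined = x)}"
    proof (cases "\<exists>n. posn ob \<omega> k n")
      case True
      then obtain n where n: "posn ob \<omega> k n" by blast
      then show ?thesis using Yseq_eqI[OF n] \<open>\<omega> \<in> _\<close> by auto
    qed (use \<open>\<omega> \<in> _\<close> in \<open>auto simp: Yseq_def\<close>)
  next
    fix \<omega> assume "\<omega> \<in> {\<omega> \<in> space (PiM UNIV (\<lambda>_::nat. measure_pmf P)).
           (\<exists>n. posn ob \<omega> k n \<and> \<omega> n = x) \<or> ((\<forall>n. \<not> posn ob \<omega> k n) \<and> undefined = x)}"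
    then show "\<omega> \<in> (\<lambda>\<omega>. Yseq ob \<omega> k) -` {x} \<inter> space (PiM UNIV (\<lambda>_::nat. measure_pmf P))"
    proof (cases "\<exists>n. posn ob \<omega> k n")
      case True
      then obtain n where n: "posn ob \<omega> k n" by blast
      have d: "(\<exists>n. posn ob \<omega> k n \<and> \<omega> n = x) \<or> ((\<forall>n. \<not> posn ob \<omega> k n) \<and> undefined = x)"
        using \<open>\<omega> \<in> _\<close> by blast
      have "\<omega> n = x"
      proof -
        from d n obtain n' where "posn ob \<omega> k n'" "\<omega> n' = x" by blast
        with posn_unique[OF n this(1)] show ?thesis by simp
      qed
      then show ?thesis using Yseq_eqI[OF n] \<open>\<omega> \<in> _\<close> by auto
    qed (use \<open>\<omega> \<in> _\<close> in \<open>auto simp: Yseq_def\<close>)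
  qed
  also have "\<dots> \<in> sets (PiM UNIV (\<lambda>_::nat. measure_pmf P))"
    by measurable
  finally show "(\<lambda>\<omega>. Yseq ob \<omega> k) -` {x} \<inter> space (PiM UNIV (\<lambda>_::nat. measure_pmf P))
     \<in> sets (PiM UNIV (\<lambda>_::nat. measure_pmf P))" .
qed auto

lemma Yseq_meas:
  "Yseq ob \<in> PiM UNIV (\<lambda>_::nat. measure_pmf (P::'a::countable pmf)) \<rightarrow>\<^sub>M PiM UNIV (\<lambda>_::nat. measure_pmf R)"
proof -
  have "(\<lambda>\<omega> k. Yseq ob \<omega> k) \<in> PiM UNIV (\<lambda>_::nat. measure_pmf P) \<rightarrow>\<^sub>M PiM UNIV (\<lambda>_::nat. measure_pmf R)"
  proof (rule measurable_PiM_single')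
    fix k :: nat
    show "(\<lambda>\<omega>. Yseq ob \<omega> k) \<in> PiM UNIV (\<lambda>_::nat. measure_pmf P) \<rightarrow>\<^sub>M measure_pmf R"
      using Yseq_comp_meas by (simp add: measurable_cong_sets[OF refl sets_measure_pmf_count_space])
  qed auto
  then show ?thesis by simp
qed



lemma Yseq_in_meas [measurable]:
  "Measurable.pred (PiM UNIV (\<lambda>_::nat. measure_pmf (P::'a::countable pmf))) (\<lambda>\<omega>. Yseq ob \<omega> j \<in> A)"
proof -
  have "(\<lambda>y. y \<in> A) \<in> count_space UNIV \<rightarrow>\<^sub>M count_space UNIV" by simp
  from measurable_comp[OF Yseq_comp_meas this] show ?thesis by (simp add: o_def)
qed

lemma emeasure_cond_aux:
  fixes Q R :: "'a pmf" and a :: real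
  assumes R: "\<And>x. pmf R x = (if ob x then pmf Q x / a else 0)" and a: "a > 0"
  shows "emeasure (measure_pmf R) A * ennreal a = emeasure (measure_pmf Q) (A \<inter> {x. ob x})"
proof -
  have "emeasure (measure_pmf R) A * ennreal a = (\<integral>\<^sup>+x. indicator A x \<partial>measure_pmf R) * ennreal a"
    by simp
  also have "\<dots> = (\<integral>\<^sup>+x. ennreal (pmf R x) * indicator A x \<partial>count_space UNIV) * ennreal a"
    by (simp add: nn_integral_measure_pmf)
  also have "\<dots> = (\<integral>\<^sup>+x. ennreal (pmf R x) * indicator A x * ennreal a \<partial>count_space UNIV)"
    by (rule nn_integral_multc[symmetric]) simp
  also have "\<dots> = (\<integral>\<^sup>+x. ennreal (pmf Q x) * indicator (A \<inter> {x. ob x}) x \<partial>count_space UNIV)"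
  proof (rule nn_integral_cong)
    fix x
    show "ennreal (pmf R x) * indicator A x * ennreal a = ennreal (pmf Q x) * indicator (A \<inter> {x. ob x}) x"
      using a by (auto simp: R indicator_def ennreal_mult''[symmetric])
  qed
  also have "\<dots> = (\<integral>\<^sup>+x. indicator (A \<inter> {x. ob x}) x \<partial>measure_pmf Q)"
    by (simp add: nn_integral_measure_pmf)
  also have "\<dots> = emeasure (measure_pmf Q) (A \<inter> {x. ob x})" by simp
  finally show ?thesis .
qed

lemma all_less_Suc_split: "(\<forall>j<Suc n. P j) \<longleftrightarrow> P 0 \<and> (\<forall>j<n. P (Suc j))"
  using less_Suc_eq_0_disj by auto

lemma Yseq_fin:
  fixes Q R :: "'a::countable pmf" and a :: real
  defines "S \<equiv> PiM UNIV (\<lambda>_::nat. measure_pmf Q)"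
  assumes R: "\<And>x. pmf R x = (if ob x then pmf Q x / a else 0)"
    and a_def: "a = measure_pmf.prob Q {x. ob x}" and a: "a > 0"
  shows "emeasure S {\<omega>\<in>space S. \<forall>j<n. Yseq ob \<omega> j \<in> F j} = (\<Prod>j<n. emeasure (measure_pmf R) (F j))"
proof (induction n arbitrary: F)
  case 0
  interpret prob_space S unfolding S_def by (rule prob_space_PiM) (rule prob_space_measure_pmf)
  show ?case using emeasure_space_1 by simp
next
  case (Suc n)
  interpret SS: sequence_space "measure_pmf Q" by unfold_locales
  interpret PS: prob_space S unfolding S_def by (rule prob_space_PiM) (rule prob_space_measure_pmf)
  define E where "E = {\<omega>\<in>space S. \<forall>j<Suc n. Yseq ob \<omega> j \<in> F j}"
  define E' where "E' = {\<omega>\<in>space S. \<forall>j<n. Yseq ob \<omega> j \<in> F (Suc j)}"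
  have Emeas: "E \<in> sets S" unfolding E_def S_def by measurable
  have T: "emeasure S E' = (\<Prod>j<n. emeasure (measure_pmf R) (F (Suc j)))"
    unfolding E'_def by (rule Suc.IH)
  have spS: "space S = UNIV" by (simp add: S_def space_PiM)
  let ?f = "\<lambda>(s, \<omega>). case_nat s \<omega>"
  have fm: "?f \<in> measure_pmf Q \<Otimes>\<^sub>M S \<rightarrow>\<^sub>M S" unfolding S_def by measurable
  have "emeasure S E = emeasure (distr (measure_pmf Q \<Otimes>\<^sub>M S) S ?f) E"
    using SS.PiM_iter unfolding S_def by simp
  also have "\<dots> = emeasure (measure_pmf Q \<Otimes>\<^sub>M S) (?f -` E \<inter> space (measure_pmf Q \<Otimes>\<^sub>M S))"
    by (rule emeasure_distr[OF fm Emeas])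
  also have "\<dots> = (\<integral>\<^sup>+x. emeasure S (Pair x -` (?f -` E \<inter> space (measure_pmf Q \<Otimes>\<^sub>M S))) \<partial>measure_pmf Q)"
    by (rule PS.emeasure_pair_measure_alt) (rule measurable_sets[OF fm Emeas])
  also have "\<dots> = (\<integral>\<^sup>+x. indicator {x. ob x \<and> x \<in> F 0} x * emeasure S E' + indicator {x. \<not> ob x} x * emeasure S E \<partial>measure_pmf Q)"
  proof (rule nn_integral_cong)
    fix x
    have pre: "Pair x -` (?f -` E \<inter> space (measure_pmf Q \<Otimes>\<^sub>M S)) = {\<omega>. case_nat x \<omega> \<in> E}"
      by (auto simp: space_pair_measure spS)
    show "emeasure S (Pair x -` (?f -` E \<inter> space (measure_pmf Q \<Otimes>\<^sub>M S))) =
          indicator {x. ob x \<and> x \<in> F 0} x * emeasure S E' + indicator {x. \<not> ob x} x * emeasure S E"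
    proof (cases "ob x")
      case True
      have "{\<omega>. case_nat x \<omega> \<in> E} = (if x \<in> F 0 then E' else {})"
        using True by (auto simp: E_def E'_def spS Yseq_case_nat all_less_Suc_split)
      then show ?thesis using True pre by (simp add: indicator_def)
    next
      case False
      have "{\<omega>. case_nat x \<omega> \<in> E} = E"
        using False by (auto simp: E_def spS Yseq_case_nat)
      then show ?thesis using False pre by (simp add: indicator_def)
    qed
  qed
  also have "\<dots> = emeasure (measure_pmf Q) {x. ob x \<and> x \<in> F 0} * emeasure S E' +
                  emeasure (measure_pmf Q) {x. \<not> ob x} * emeasure S E"
    by (simp add: nn_integral_add nn_integral_multc)
  finally have eq: "emeasure S E = emeasure (measure_pmf Q) {x. ob x \<and> x \<in> F 0} * emeasure S E' +
                  emeasure (measure_pmf Q) {x. \<not> ob x} * emeasure S E" .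
  have c1: "emeasure (measure_pmf Q) {x. \<not> ob x} = ennreal (1 - a)"
  proof -
    have "measure_pmf.prob Q {x. \<not> ob x} = 1 - a"
      unfolding a_def by (subst measure_pmf.prob_compl[symmetric]) (auto intro!: arg_cong2[where f=measure])
    then show ?thesis by (simp add: measure_pmf.emeasure_eq_measure)
  qed
  have c2: "emeasure (measure_pmf R) (F 0) * ennreal a = emeasure (measure_pmf Q) {x. ob x \<and> x \<in> F 0}"
    using emeasure_cond_aux[OF R a, of "F 0"] by (simp add: Int_def conj_commute)
  define g where "g = measure S E"
  define t where "t = measure S E'"
  define r where "r = measure_pmf.prob R (F 0)"
  have "ennreal g = ennreal (r * a) * ennreal t + ennreal (1 - a) * ennreal g"
    using eq c1 c2[symmetric] a
    by (simp add: g_def t_def r_def PS.emeasure_eq_measure measure_pmf.emeasure_eq_measure ennreal_mult'')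
  moreover have "0 \<le> 1 - a" unfolding a_def by simp
  ultimately have "g = r * a * t + (1 - a) * g"
    using a by (simp add: ennreal_mult''[symmetric] ennreal_plus[symmetric] g_def t_def r_def
        del: ennreal_plus)
  then have "a * g = a * (r * t)" by (simp add: algebra_simps)
  then have "g = r * t" using a by simp
  then have "emeasure S E = emeasure (measure_pmf R) (F 0) * emeasure S E'"
    by (simp add: g_def t_def r_def PS.emeasure_eq_measure measure_pmf.emeasure_eq_measure ennreal_mult'')
  moreover have "(\<Prod>j<Suc n. emeasure (measure_pmf R) (F j)) =
     emeasure (measure_pmf R) (F 0) * (\<Prod>j<n. emeasure (measure_pmf R) (F (Suc j)))"
    by (rule prod.lessThan_Suc_shift)
  ultimately show ?case
    unfolding E_def using T by simp
qed


lemma Yseq_distr: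
  fixes Q R :: "'a::countable pmf" and a :: real
  defines "S \<equiv> PiM UNIV (\<lambda>_::nat. measure_pmf Q)"
  assumes R: "\<And>x. pmf R x = (if ob x then pmf Q x / a else 0)"
    and a_def: "a = measure_pmf.prob Q {x. ob x}" and a: "a > 0"
  shows "distr S (PiM UNIV (\<lambda>_::nat. measure_pmf R)) (Yseq ob) = PiM UNIV (\<lambda>_::nat. measure_pmf R)"
proof -
  interpret RS: product_prob_space "\<lambda>_::nat. measure_pmf R" UNIV by unfold_locales
  have Ym: "Yseq ob \<in> S \<rightarrow>\<^sub>M PiM UNIV (\<lambda>_::nat. measure_pmf R)"
    unfolding S_def by (rule Yseq_meas)
  have spS: "space S = UNIV" by (simp add: S_def space_PiM)
  show ?thesis
  proof (rule RS.PiM_eq)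
    fix J :: "nat set" and F
    assume J: "finite J" "J \<subseteq> UNIV" and F: "\<And>j. j \<in> J \<Longrightarrow> F j \<in> sets (measure_pmf R)"
    obtain n where n: "J \<subseteq> {..<n}" using J(1) finite_nat_iff_bounded by auto
    define F' where "F' j = (if j \<in> J then F j else UNIV)" for j
    have set_in: "prod_emb UNIV (\<lambda>_. measure_pmf R) J (Pi\<^sub>E J F) \<in> sets (PiM UNIV (\<lambda>_::nat. measure_pmf R))"
      using J F by (intro sets_PiM_I) auto
    have "emeasure (distr S (PiM UNIV (\<lambda>_::nat. measure_pmf R)) (Yseq ob)) (prod_emb UNIV (\<lambda>_. measure_pmf R) J (Pi\<^sub>E J F))
       = emeasure S (Yseq ob -` prod_emb UNIV (\<lambda>_. measure_pmf R) J (Pi\<^sub>E J F) \<inter> space S)"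
      by (rule emeasure_distr[OF Ym set_in])
    also have "Yseq ob -` prod_emb UNIV (\<lambda>_. measure_pmf R) J (Pi\<^sub>E J F) \<inter> space S =
               {\<omega>\<in>space S. \<forall>j<n. Yseq ob \<omega> j \<in> F' j}"
      using n by (auto simp: prod_emb_def space_PiM spS F'_def PiE_iff subset_iff)
    also have "emeasure S \<dots> = (\<Prod>j<n. emeasure (measure_pmf R) (F' j))"
      unfolding S_def by (rule Yseq_fin[OF R a_def a])
    also have "\<dots> = (\<Prod>j<n. if j \<in> J then emeasure (measure_pmf R) (F j) else 1)"
      by (intro prod.cong) (auto simp: F'_def)
    also have "\<dots> = (\<Prod>j\<in>{..<n} \<inter> J. emeasure (measure_pmf R) (F j))"
      by (rule prod.inter_restrict[symmetric]) simp
    also have "{..<n} \<inter> J = J" using n by auto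
    finally show "emeasure (distr S (PiM UNIV (\<lambda>_::nat. measure_pmf R)) (Yseq ob)) (prod_emb UNIV (\<lambda>_. measure_pmf R) J (Pi\<^sub>E J F))
       = (\<Prod>j\<in>J. emeasure (measure_pmf R) (F j))" .
  qed simp
qed



lemma tendsto_of_eps:
  fixes X :: "nat \<Rightarrow> real"
  assumes "\<And>m. eventually (\<lambda>n. \<bar>X n - L\<bar> < 1 / real (Suc m)) sequentially"
  shows "X \<longlonglongrightarrow> L"
proof (rule tendstoI)
  fix e :: real assume e: "e > 0"
  obtain m where m: "inverse (real (Suc m)) < e" using reals_Archimedean[OF e] by auto
  show "eventually (\<lambda>n. dist (X n) L < e) sequentially"
    using assms[of m]
  proof eventually_elim
    case (elim n)
    have "\<bar>X n - L\<bar> < inverse (real (Suc m))" using elim by (simp add: inverse_eq_divide)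
    then show ?case using m by (simp add: dist_real_def)
  qed
qed

lemma coords_indep:
  fixes Q :: "'a pmf" and I :: "nat set"
  assumes "I \<noteq> {}"
  shows "prob_space.indep_vars (PiM UNIV (\<lambda>_::nat. measure_pmf Q)) (\<lambda>_. measure_pmf Q) (\<lambda>i \<omega>. \<omega> i) I"
proof -
  interpret prob_space "PiM UNIV (\<lambda>_::nat. measure_pmf Q)"
    by (rule prob_space_PiM) (rule prob_space_measure_pmf)
  have rv: "random_variable (measure_pmf Q) (\<lambda>\<omega>. \<omega> i)" for i
    by (rule measurable_component_singleton) simp
  have d1: "distr (PiM UNIV (\<lambda>_::nat. measure_pmf Q)) (PiM I (\<lambda>_. measure_pmf Q)) (\<lambda>x. \<lambda>i\<in>I. x i)
       = PiM I (\<lambda>_. measure_pmf Q)"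
    using distr_PiM_reindex[of UNIV "\<lambda>_. measure_pmf Q" id I] by (simp add: prob_space_measure_pmf)
  have d2: "distr (PiM UNIV (\<lambda>_::nat. measure_pmf Q)) (measure_pmf Q) (\<lambda>x. x i) = measure_pmf Q" for i
    by (rule distr_PiM_component) (simp_all add: prob_space_measure_pmf)
  show ?thesis
    by (subst indep_vars_iff_distr_eq_PiM'[OF assms rv]) (simp add: d1 d2)
qed

lemma hoeffding_bound:
  fixes Q :: "'a pmf" and f :: "'a \<Rightarrow> real"
  assumes f0: "\<And>x. 0 \<le> f x" and f1: "\<And>x. f x \<le> 1" and n: "n > 0" and e: "e \<ge> 0"
  shows "measure (PiM UNIV (\<lambda>_::nat. measure_pmf Q))
           {\<omega> \<in> space (PiM UNIV (\<lambda>_::nat. measure_pmf Q)).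
              e \<le> \<bar>(\<Sum>i\<in>{..<n}. f (\<omega> i)) / real n - measure_pmf.expectation Q f\<bar>}
         \<le> 2 * exp (- 2 * real n * e\<^sup>2)"
proof -
  let ?S = "PiM UNIV (\<lambda>_::nat. measure_pmf Q)"
  interpret PS: prob_space ?S
    by (rule prob_space_PiM) (rule prob_space_measure_pmf)
  have c0: "(\<lambda>\<omega>. \<omega> i) \<in> ?S \<rightarrow>\<^sub>M measure_pmf Q" for i
    by (rule measurable_component_singleton) simp
  have fm: "f \<in> borel_measurable (measure_pmf Q)" by simp
  have fc: "(\<lambda>\<omega>. f (\<omega> i)) \<in> borel_measurable ?S" for i
    using measurable_comp[OF c0 fm] by (simp add: o_def)
  have d2: "distr ?S (measure_pmf Q) (\<lambda>x. x i) = measure_pmf Q" for i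
    by (rule distr_PiM_component) (simp_all add: prob_space_measure_pmf)
  have dX: "distr ?S borel (\<lambda>\<omega>. f (\<omega> i)) = distr (measure_pmf Q) borel f" for i
  proof -
    have "distr ?S borel (\<lambda>\<omega>. f (\<omega> i)) = distr (distr ?S (measure_pmf Q) (\<lambda>x. x i)) borel f"
      by (subst distr_distr[OF fm c0]) (simp add: o_def)
    then show ?thesis by (simp add: d2)
  qed
  have ind: "PS.indep_vars (\<lambda>_. borel) (\<lambda>i \<omega>. f (\<omega> i)) {..<n}"
    using PS.indep_vars_compose2[OF coords_indep[of "{..<n}" Q], of "\<lambda>_. f" "\<lambda>_. borel"] n
    by auto
  interpret H: Hoeffding_ineq_iid ?S "{..<n}" "\<lambda>i \<omega>. f (\<omega> i)" "\<lambda>\<omega>. f (\<omega> 0)" 0 1 "PS.expectation (\<lambda>\<omega>. f (\<omega> 0))"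
  proof unfold_locales
    show "PS.indep_vars (\<lambda>_. borel) (\<lambda>i \<omega>. f (\<omega> i)) {..<n}" by (rule ind)
    show "\<And>i. i \<in> {..<n} \<Longrightarrow> distr ?S borel (\<lambda>\<omega>. f (\<omega> i)) = distr ?S borel (\<lambda>\<omega>. f (\<omega> 0))"
      by (simp add: dX)
    show "(\<lambda>\<omega>. f (\<omega> 0)) \<in> borel_measurable ?S" by (rule fc)
    show "AE x in ?S. f (x 0) \<in> {0..1}" using f0 f1 by simp
  qed simp
  have mu: "PS.expectation (\<lambda>\<omega>. f (\<omega> 0)) = measure_pmf.expectation Q f"
    using integral_distr[OF c0 fm, symmetric] by (simp add: d2)
  show ?thesis
  proof -
    have ne: "{..<n} \<noteq> {}" using n by auto
    show ?thesis using H.Hoeffding_ineq_abs_ge'[OF e _ ne] by (simp add: mu)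
  qed
qed

lemma slln_bounded:
  fixes Q :: "'a pmf" and f :: "'a \<Rightarrow> real"
  assumes f0: "\<And>x. 0 \<le> f x" and f1: "\<And>x. f x \<le> 1"
  shows "AE \<omega> in PiM UNIV (\<lambda>_::nat. measure_pmf Q).
           (\<lambda>n. (\<Sum>i<n. f (\<omega> i)) / real n) \<longlonglongrightarrow> measure_pmf.expectation Q f"
proof -
  let ?S = "PiM UNIV (\<lambda>_::nat. measure_pmf Q)"
  let ?mu = "measure_pmf.expectation Q f"
  interpret PS: prob_space ?S
    by (rule prob_space_PiM) (rule prob_space_measure_pmf)
  have c0: "(\<lambda>\<omega>. \<omega> i) \<in> ?S \<rightarrow>\<^sub>M measure_pmf Q" for i
    by (rule measurable_component_singleton) simp
  have fm: "f \<in> borel_measurable (measure_pmf Q)" by simp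
  have fc: "(\<lambda>\<omega>. f (\<omega> i)) \<in> borel_measurable ?S" for i
    using measurable_comp[OF c0 fm] by (simp add: o_def)
  have "AE \<omega> in ?S. eventually (\<lambda>n. \<bar>(\<Sum>i<n. f (\<omega> i)) / real n - ?mu\<bar> < 1 / real (Suc m)) sequentially"
    for m
  proof -
    define e where "e = 1 / real (Suc m)"
    have e: "e > 0" by (simp add: e_def)
    define A where "A n = {\<omega> \<in> space ?S. e \<le> \<bar>(\<Sum>i\<in>{..<n}. f (\<omega> i)) / real n - ?mu\<bar>}" for n
    have Am: "A n \<in> sets ?S" for n
      unfolding A_def using fc by measurable
    have bound: "measure ?S (A n) \<le> 2 * exp (- 2 * e\<^sup>2) ^ n" for n
    proof (cases "n = 0")
      case True
      have h: "measure ?S (A 0) \<le> 1" by (rule PS.prob_le_1)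
      show ?thesis using True order_trans[OF h, of 2] by simp
    next
      case False
      have "measure ?S (A n) \<le> 2 * exp (- 2 * real n * e\<^sup>2)"
        unfolding A_def by (rule hoeffding_bound) (use f0 f1 False e in auto)
      also have "exp (- 2 * real n * e\<^sup>2) = exp (- 2 * e\<^sup>2) ^ n"
        by (subst exp_of_nat_mult[symmetric]) (simp add: algebra_simps)
      finally show ?thesis .
    qed
    have "summable (\<lambda>n. 2 * exp (- 2 * e\<^sup>2) ^ n)"
      using e by (intro summable_mult summable_geometric) auto
    then have sm: "summable (\<lambda>n. measure ?S (A n))"
      by (rule summable_comparison_test[rotated]) (use bound in auto)
    have "AE \<omega> in ?S. eventually (\<lambda>n. \<omega> \<in> space ?S - A n) sequentially"
      by (rule borel_cantelli_AE1[OF Am _ sm]) (simp add: PS.emeasure_eq_measure)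
    then show ?thesis
      by eventually_elim (auto elim!: eventually_mono simp: A_def e_def not_le)
  qed
  then have "AE \<omega> in ?S. \<forall>m. eventually (\<lambda>n. \<bar>(\<Sum>i<n. f (\<omega> i)) / real n - ?mu\<bar> < 1 / real (Suc m)) sequentially"
    by (subst AE_all_countable) auto
  then show ?thesis
    by eventually_elim (rule tendsto_of_eps, auto)
qed



lemma rate_to_inf:
  fixes S :: "nat \<Rightarrow> nat"
  assumes lim: "(\<lambda>N. real (S N) / real N) \<longlonglongrightarrow> a" and a: "a > 0"
  shows "filterlim S at_top sequentially"
proof -
  have "filterlim (\<lambda>N. real (S N) / real N * real N) at_top sequentially"
    by (rule filterlim_tendsto_pos_mult_at_top[OF lim a filterlim_real_sequentially])
  moreover have ev: "eventually (\<lambda>N. real (S N) / real N * real N = real (S N)) sequentially"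
    using eventually_gt_at_top[of 0] by eventually_elim simp
  ultimately have r: "filterlim (\<lambda>N. real (S N)) at_top sequentially"
    using filterlim_cong[OF refl refl ev] by simp
  show ?thesis
    unfolding filterlim_at_top
  proof
    fix Z :: nat
    have "eventually (\<lambda>N. real Z \<le> real (S N)) sequentially"
      using r unfolding filterlim_at_top by blast
    then show "eventually (\<lambda>N. Z \<le> S N) sequentially" by eventually_elim simp
  qed
qed

lemma comp_rate:
  fixes S :: "nat \<Rightarrow> nat" and g :: "nat \<Rightarrow> real"
  assumes lim: "(\<lambda>N. real (S N) / real N) \<longlonglongrightarrow> a" and a: "a > 0"
    and g: "(\<lambda>k. g k / real k) \<longlonglongrightarrow> l"
  shows "(\<lambda>N. g (S N) / real N) \<longlonglongrightarrow> l * a"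
proof -
  have Sinf: "filterlim S at_top sequentially" by (rule rate_to_inf[OF lim a])
  have "(\<lambda>N. g (S N) / real (S N)) \<longlonglongrightarrow> l"
    using filterlim_compose[OF g Sinf] by simp
  then have t: "(\<lambda>N. g (S N) / real (S N) * (real (S N) / real N)) \<longlonglongrightarrow> l * a"
    by (rule tendsto_mult[OF _ lim])
  have "eventually (\<lambda>N. 1 \<le> S N) sequentially"
    using Sinf unfolding filterlim_at_top by blast
  then have "eventually (\<lambda>N. g (S N) / real (S N) * (real (S N) / real N) = g (S N) / real N) sequentially"
    by eventually_elim simp
  then show ?thesis using t by (rule Lim_transform_eventually[rotated])
qed

lemma hit_all:
  fixes S :: "nat \<Rightarrow> nat"
  assumes S0: "S 0 = 0" and Sstep: "\<And>N. S (Suc N) \<le> Suc (S N)"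
  shows "k \<le> S N \<Longrightarrow> \<exists>m\<le>N. S m = k"
proof (induction N arbitrary: k)
  case 0
  then show ?case using S0 by auto
next
  case (Suc N)
  show ?case
  proof (cases "k \<le> S N")
    case True
    then show ?thesis using Suc.IH by (meson le_Suc_eq)
  next
    case False
    then have "S (Suc N) = k" using Suc.prems Sstep[of N] by linarith
    then show ?thesis by blast
  qed
qed

lemma inv_rate:
  fixes S :: "nat \<Rightarrow> nat" and g :: "nat \<Rightarrow> real"
  assumes S0: "S 0 = 0" and Sstep: "\<And>N. S (Suc N) \<le> Suc (S N)"
    and lim: "(\<lambda>N. real (S N) / real N) \<longlonglongrightarrow> a" and a: "a > 0"
    and h: "(\<lambda>N. g (S N) / real N) \<longlonglongrightarrow> 1"
  shows "(\<lambda>k. g k / real k) \<longlonglongrightarrow> 1 / a"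
proof -
  have Sinf: "filterlim S at_top sequentially" by (rule rate_to_inf[OF lim a])
  have ex: "\<exists>N. S N = k" for k
  proof -
    have "eventually (\<lambda>N. k \<le> S N) sequentially"
      using Sinf unfolding filterlim_at_top by blast
    then obtain N0 where "\<forall>n\<ge>N0. k \<le> S n" unfolding eventually_sequentially by blast
    then obtain N where "k \<le> S N" by blast
    then show ?thesis using hit_all[OF S0 Sstep] by blast
  qed
  define \<nu> where "\<nu> k = (LEAST N. S N = k)" for k
  have S\<nu>: "S (\<nu> k) = k" for k unfolding \<nu>_def by (rule LeastI_ex[OF ex])
  have "\<nu> k < \<nu> (Suc k)" for k
  proof -
    have "k \<le> S (\<nu> (Suc k))" by (simp add: S\<nu>)
    then obtain m where m: "m \<le> \<nu> (Suc k)" "S m = k" using hit_all[OF S0 Sstep] by blast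
    have "\<nu> k \<le> m" unfolding \<nu>_def by (rule Least_le) (rule m(2))
    moreover have "m \<noteq> \<nu> (Suc k)" using m(2) S\<nu>[of "Suc k"] by auto
    ultimately show ?thesis using m(1) by linarith
  qed
  then have sm: "strict_mono \<nu>" by (simp add: strict_mono_Suc_iff)
  have \<nu>inf: "filterlim \<nu> at_top sequentially" by (rule filterlim_subseq[OF sm])
  have t1: "(\<lambda>k. g k / real (\<nu> k)) \<longlonglongrightarrow> 1"
    using filterlim_compose[OF h \<nu>inf] by (simp add: S\<nu>)
  have t2: "(\<lambda>k. real k / real (\<nu> k)) \<longlonglongrightarrow> a"
    using filterlim_compose[OF lim \<nu>inf] by (simp add: S\<nu>)
  have t: "(\<lambda>k. (g k / real (\<nu> k)) / (real k / real (\<nu> k))) \<longlonglongrightarrow> 1 / a"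
    by (rule tendsto_divide[OF t1 t2]) (use a in simp)
  have "eventually (\<lambda>k. (g k / real (\<nu> k)) / (real k / real (\<nu> k)) = g k / real k) sequentially"
    using eventually_gt_at_top[of 0]
  proof eventually_elim
    case (elim k)
    have "\<nu> k \<noteq> 0"
    proof
      assume "\<nu> k = 0"
      then have "S 0 = k" using S\<nu>[of k] by simp
      then show False using S0 elim by simp
    qed
    then show ?case by simp
  qed
  then show ?thesis using t by (rule Lim_transform_eventually[rotated])
qed



lemma finite_patterns: "finite (patterns L)"
  using finite_lists_length_eq[of "UNIV :: bool set" L] by (simp add: patterns_def)

lemma zero_in_patterns: "zero_pattern L \<in> patterns L"
  by (simp add: patterns_def zero_pattern_def)

lemma pat_weight_zero: "pat_weight (zero_pattern L) = 0"
  by (simp add: pat_weight_def zero_pattern_def)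

lemma patterns_Suc: "patterns (Suc L) = Cons True ` patterns L \<union> Cons False ` patterns L"
proof (intro set_eqI iffI)
  fix x assume "x \<in> patterns (Suc L)"
  then show "x \<in> Cons True ` patterns L \<union> Cons False ` patterns L"
    by (cases x) (auto simp: patterns_def)
qed (auto simp: patterns_def)

lemma sign_sum_zero:
  assumes "L \<ge> 1"
  shows "(\<Sum>x\<in>patterns L. (-1::real) ^ (pat_weight x + 1)) = 0"
proof -
  obtain L' where L': "L = Suc L'" using assms by (cases L) auto
  have "(\<Sum>x\<in>patterns (Suc L'). (-1::real) ^ (pat_weight x + 1)) =
        (\<Sum>x\<in>Cons True ` patterns L'. (-1::real) ^ (pat_weight x + 1)) +
        (\<Sum>x\<in>Cons False ` patterns L'. (-1::real) ^ (pat_weight x + 1))"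
    unfolding patterns_Suc by (rule sum.union_disjoint) (auto simp: finite_patterns)
  also have "\<dots> = (\<Sum>x\<in>patterns L'. (-1::real) ^ (pat_weight x + 2)) +
        (\<Sum>x\<in>patterns L'. (-1::real) ^ (pat_weight x + 1))"
    by (subst sum.reindex, simp, subst sum.reindex, simp) (simp add: pat_weight_def)
  also have "\<dots> = 0"
    by (simp add: sum.distrib[symmetric])
  finally show ?thesis using L' by simp
qed

lemma nonzero_pattern_exists:
  assumes "L \<ge> 1"
  shows "\<exists>x. x \<in> patterns L \<and> x \<noteq> zero_pattern L"
proof -
  obtain L' where L': "L = Suc L'" using assms by (cases L) auto
  show ?thesis
    by (rule exI[of _ "True # replicate L' False"]) (simp add: L' patterns_def zero_pattern_def)
qed

lemma Qprime_exists:
  fixes Q :: "bool list pmf"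
  assumes L: "L \<ge> 1" and pm: "positive_model L Q"
  defines "p0 \<equiv> pmf Q (zero_pattern L)" and "\<gamma> \<equiv> full_interaction L Q"
  defines "c \<equiv> 1 / (1 - p0 + p0 * exp \<gamma>)"
  shows "p0 > 0" "p0 < 1" "c > 0"
    and "\<exists>Q'. positive_model L Q' \<and> full_interaction L Q' = 0 \<and>
           (\<forall>x. x \<noteq> zero_pattern L \<longrightarrow> pmf Q' x = c * pmf Q x)"
proof -
  define z where "z = zero_pattern L"
  have setQ: "set_pmf Q = patterns L" using pm by (simp add: positive_model_def)
  have pos: "x \<in> patterns L \<Longrightarrow> pmf Q x > 0" for x
    using setQ by (metis pmf_nonneg set_pmf_iff order_le_less)
  have sum1: "(\<Sum>x\<in>patterns L. pmf Q x) = 1"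
    using sum_pmf_eq_1[OF finite_patterns, of Q L] setQ by simp
  have zin: "z \<in> patterns L" by (simp add: z_def zero_in_patterns)
  show p0pos: "p0 > 0" unfolding p0_def using pos zin z_def by simp
  obtain x1 where x1: "x1 \<in> patterns L" "x1 \<noteq> z" using nonzero_pattern_exists[OF L] z_def by auto
  have rest: "(\<Sum>x\<in>patterns L - {z}. pmf Q x) = 1 - p0"
    using sum_diff1[OF finite_patterns[of L], of "pmf Q" z] zin sum1 by (simp add: p0_def z_def)
  have "pmf Q x1 \<le> (\<Sum>x\<in>patterns L - {z}. pmf Q x)"
    by (rule member_le_sum) (use x1 finite_patterns in auto)
  then have "1 - p0 > 0" using rest pos[OF x1(1)] by linarith
  then show p0lt: "p0 < 1" by simp
  have den: "1 - p0 + p0 * exp \<gamma> > 0" using p0lt p0pos by (simp add: add_pos_pos)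
  show cpos: "c > 0" unfolding c_def using den by simp
  define q where "q x = (if x \<in> patterns L then (if x = z then c * p0 * exp \<gamma> else c * pmf Q x) else 0)" for x
  have q0: "0 \<le> q x" for x using cpos p0pos by (simp add: q_def)
  have qsum: "(\<Sum>x\<in>patterns L. q x) = 1"
  proof -
    have "(\<Sum>x\<in>patterns L. q x) = q z + (\<Sum>x\<in>patterns L - {z}. q x)"
      using zin finite_patterns by (simp add: sum.remove)
    also have "(\<Sum>x\<in>patterns L - {z}. q x) = (\<Sum>x\<in>patterns L - {z}. c * pmf Q x)"
      by (rule sum.cong) (auto simp: q_def)
    also have "\<dots> = c * (1 - p0)" by (simp add: sum_distrib_left[symmetric] rest)
    also have "q z = c * p0 * exp \<gamma>" using zin by (simp add: q_def)
    also have "c * p0 * exp \<gamma> + c * (1 - p0) = c * (1 - p0 + p0 * exp \<gamma>)" by (simp add: algebra_simps)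
    also have "\<dots> = 1" using den by (simp add: c_def)
    finally show ?thesis .
  qed
  have int1: "(\<integral>\<^sup>+x. ennreal (q x) \<partial>count_space UNIV) = 1"
  proof -
    have "(\<integral>\<^sup>+x. ennreal (q x) \<partial>count_space UNIV) = (\<Sum>x\<in>patterns L. ennreal (q x))"
      by (rule nn_integral_count_space') (auto simp: finite_patterns q_def)
    also have "\<dots> = ennreal (\<Sum>x\<in>patterns L. q x)" by (rule sum_ennreal) (rule q0)
    finally show ?thesis using qsum by simp
  qed
  define Q' where "Q' = embed_pmf q"
  have pQ': "pmf Q' x = q x" for x unfolding Q'_def by (rule pmf_embed_pmf[OF q0 int1])
  have qpos: "x \<in> patterns L \<Longrightarrow> q x > 0" for x
    using cpos p0pos pos by (auto simp: q_def)
  have "set_pmf Q' = {x. q x \<noteq> 0}" unfolding Q'_def by (rule set_embed_pmf[OF q0 int1])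
  also have "\<dots> = patterns L"
  proof (intro set_eqI)
    fix x show "x \<in> {x. q x \<noteq> 0} \<longleftrightarrow> x \<in> patterns L"
      using qpos[of x] by (cases "x \<in> patterns L") (simp_all add: q_def)
  qed
  finally have pmQ': "positive_model L Q'" by (simp add: positive_model_def)
  have lnq: "ln (q x) = ln c + ln (pmf Q x) + (if x = z then \<gamma> else 0)" if "x \<in> patterns L" for x
  proof (cases "x = z")
    case True
    have "ln (c * p0 * exp \<gamma>) = ln c + ln p0 + \<gamma>"
      using cpos p0pos by (simp add: ln_mult)
    then show ?thesis using True zin by (simp add: q_def p0_def z_def)
  next
    case False
    have "ln (c * pmf Q x) = ln c + ln (pmf Q x)"
      using cpos pos[OF that] by (simp add: ln_mult)
    then show ?thesis using False that by (simp add: q_def)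
  qed
  have "full_interaction L Q' = (\<Sum>x\<in>patterns L. (-1) ^ (pat_weight x + 1) * ln (q x))"
    by (simp add: full_interaction_def pQ')
  also have "\<dots> = (\<Sum>x\<in>patterns L. (-1) ^ (pat_weight x + 1) * ln c
        + (-1) ^ (pat_weight x + 1) * ln (pmf Q x) + (if x = z then (-1) ^ (pat_weight x + 1) * \<gamma> else 0))"
    by (rule sum.cong[OF refl]) (simp add: lnq distrib_left)
  also have "\<dots> = (\<Sum>x\<in>patterns L. (-1) ^ (pat_weight x + 1)) * ln c + \<gamma>
        + (\<Sum>x\<in>patterns L. (if x = z then (-1) ^ (pat_weight x + 1) * \<gamma> else 0))"
    unfolding \<gamma>_def full_interaction_def by (simp only: sum.distrib sum_distrib_right)
  also have "(\<Sum>x\<in>patterns L. (if x = z then (-1) ^ (pat_weight x + 1) * \<gamma> else 0)) = - \<gamma>"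
    using zin finite_patterns by (simp add: sum.delta z_def pat_weight_zero)
  also have "(\<Sum>x\<in>patterns L. (-1::real) ^ (pat_weight x + 1)) = 0" by (rule sign_sum_zero[OF L])
  finally have fi: "full_interaction L Q' = 0" by simp
  have "\<forall>x. x \<noteq> zero_pattern L \<longrightarrow> pmf Q' x = c * pmf Q x"
  proof (intro allI impI)
    fix x assume "x \<noteq> zero_pattern L"
    show "pmf Q' x = c * pmf Q x"
    proof (cases "x \<in> patterns L")
      case True
      then show ?thesis using \<open>x \<noteq> zero_pattern L\<close> by (simp add: pQ' q_def z_def)
    next
      case False
      then have "pmf Q x = 0" using setQ by (metis set_pmf_iff)
      then show ?thesis using False by (simp add: pQ' q_def)
    qed
  qed
  then show "\<exists>Q'. positive_model L Q' \<and> full_interaction L Q' = 0 \<and>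
           (\<forall>x. x \<noteq> zero_pattern L \<longrightarrow> pmf Q' x = c * pmf Q x)"
    using pmQ' fi by blast
qed



definition obp :: "nat \<Rightarrow> bool list \<Rightarrow> bool" where
  "obp L x \<longleftrightarrow> x \<in> patterns L \<and> x \<noteq> zero_pattern L"

definition cntl :: "nat \<Rightarrow> bool list list \<Rightarrow> bool list \<Rightarrow> nat" where
  "cntl L xs = (\<lambda>x. if obp L x then count_list xs x else 0)"

lemma card_eq_count_list: "card {i. i < N \<and> \<omega> i = x} = count_list (map \<omega> [0..<N]) x"
proof (induction N)
  case (Suc N)
  have "{i. i < Suc N \<and> \<omega> i = x} = {i. i < N \<and> \<omega> i = x} \<union> (if \<omega> N = x then {N} else {})"
    by (auto simp: less_Suc_eq)
  then show ?case using Suc by (simp add: count_list_append)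
qed simp

lemma count_list_filter: "count_list (filter P xs) x = (if P x then count_list xs x else 0)"
  by (induction xs) auto

lemma obs_counts_eq:
  "obs_counts L \<omega> N = cntl L (map (Yseq (obp L) \<omega>) [0..<cntO (obp L) \<omega> N])"
proof (rule ext)
  fix x
  show "obs_counts L \<omega> N x = cntl L (map (Yseq (obp L) \<omega>) [0..<cntO (obp L) \<omega> N]) x"
    unfolding filter_map_Yseq[symmetric]
    by (simp add: obs_counts_def cntl_def count_list_filter card_eq_count_list obp_def)
qed

lemma G_meas [measurable]:
  "(\<lambda>y. Nhat (cntl L (map y [0..<k])) / real k) \<in> borel_measurable (PiM UNIV (\<lambda>_::nat. measure_pmf R))"
  by (rule prefix_fun_meas[where f = "\<lambda>xs. Nhat (cntl L xs) / real k"]) simp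

lemma cntO_real: "real (cntO ob \<omega> N) = (\<Sum>i<N. (\<lambda>x. if ob x then 1 else 0) (\<omega> i))"
  unfolding cntO_def of_nat_sum by (rule sum.cong) auto

lemma expect_ind: "measure_pmf.expectation Q (\<lambda>x. if ob x then 1 else 0) = measure_pmf.prob Q {x. ob x}"
proof -
  have "(\<lambda>x. if ob x then 1 else 0 :: real) = indicator {x. ob x}" by (auto simp: indicator_def)
  then show ?thesis by (simp add: integral_indicator)
qed

lemma slln_cnt:
  "AE \<omega> in iid_patterns Q. (\<lambda>N. real (cntO ob \<omega> N) / real N) \<longlonglongrightarrow> measure_pmf.prob Q {x. ob x}"
proof -
  have "AE \<omega> in iid_patterns Q. (\<lambda>N. (\<Sum>i<N. (\<lambda>x. if ob x then 1 else 0) (\<omega> i)) / real N)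
          \<longlonglongrightarrow> measure_pmf.expectation Q (\<lambda>x. if ob x then 1 else 0)"
    unfolding iid_patterns_def by (rule slln_bounded) auto
  then show ?thesis by (simp add: cntO_real[symmetric] expect_ind)
qed



theorem theorem1:
  fixes L :: nat and Nhat :: "(bool list \<Rightarrow> nat) \<Rightarrow> real" and Q :: "bool list pmf"
  assumes "L \<ge> 2"
    and "consistent_for L Nhat (\<lambda>P. positive_model L P \<and> full_interaction L P = 0)"
    and "positive_model L Q"
  shows "AE \<omega> in iid_patterns Q.
           (\<lambda>N. (Nhat (obs_counts L \<omega> N) - real N) / real N)
             \<longlonglongrightarrow> pmf Q (zero_pattern L) * (exp (full_interaction L Q) - 1)"
proof -
  have L1: "L \<ge> 1" using assms(1) by simp
  define z where "z = zero_pattern L"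
  define ob where "ob = obp L"
  define p0 where "p0 = pmf Q z"
  define \<gamma> where "\<gamma> = full_interaction L Q"
  define c where "c = 1 / (1 - p0 + p0 * exp \<gamma>)"
  have p0pos: "p0 > 0" and p0lt: "p0 < 1" and cpos: "c > 0"
    using Qprime_exists(1-3)[OF L1 assms(3)] by (simp_all add: p0_def z_def c_def \<gamma>_def)
  obtain Q' where pmQ': "positive_model L Q'" and fiQ': "full_interaction L Q' = 0"
    and pQ': "\<And>x. x \<noteq> z \<Longrightarrow> pmf Q' x = c * pmf Q x"
    using Qprime_exists(4)[OF L1 assms(3)] by (auto simp: p0_def z_def c_def \<gamma>_def)
  have setQ: "set_pmf Q = patterns L" using assms(3) by (simp add: positive_model_def)
  have sum1: "(\<Sum>x\<in>patterns L. pmf Q x) = 1"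
    using sum_pmf_eq_1[OF finite_patterns, of Q L] setQ by simp
  have zin: "z \<in> patterns L" by (simp add: z_def zero_in_patterns)
  have obset: "{x. ob x} = patterns L - {z}" by (auto simp: ob_def obp_def z_def)
  define a where "a = measure_pmf.prob Q {x. ob x}"
  define a' where "a' = measure_pmf.prob Q' {x. ob x}"
  have a_eq: "a = 1 - p0"
  proof -
    have "a = (\<Sum>x\<in>patterns L - {z}. pmf Q x)"
      unfolding a_def obset by (rule measure_measure_pmf_finite) (simp add: finite_patterns)
    also have "\<dots> = 1 - p0"
      using sum_diff1[OF finite_patterns[of L], of "pmf Q" z] zin sum1 by (simp add: p0_def)
    finally show ?thesis .
  qed
  have apos: "a > 0" using a_eq p0lt by simp
  have a'_eq: "a' = c * a"
  proof -
    have "a' = (\<Sum>x\<in>patterns L - {z}. pmf Q' x)"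
      unfolding a'_def obset by (rule measure_measure_pmf_finite) (simp add: finite_patterns)
    also have "\<dots> = (\<Sum>x\<in>patterns L - {z}. c * pmf Q x)"
      by (rule sum.cong) (auto simp: pQ')
    also have "\<dots> = c * a"
      unfolding a_def obset by (simp add: sum_distrib_left[symmetric] measure_measure_pmf_finite finite_patterns)
    finally show ?thesis .
  qed
  have a'pos: "a' > 0" using a'_eq cpos apos by simp
  obtain x1 where x1: "x1 \<in> patterns L" "x1 \<noteq> z" using nonzero_pattern_exists[OF L1] z_def by auto
  define R where "R = cond_pmf Q {x. ob x}"
  have ne: "set_pmf Q \<inter> {x. ob x} \<noteq> {}" using x1 setQ by (auto simp: ob_def obp_def z_def)
  have hR: "pmf R x = (if ob x then pmf Q x / a else 0)" for x
    unfolding R_def a_def using pmf_cond[OF ne] by simp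
  have hR': "pmf R x = (if ob x then pmf Q' x / a' else 0)" for x
  proof (cases "ob x")
    case True
    then have "x \<noteq> z" by (simp add: ob_def obp_def z_def)
    then show ?thesis using True hR cpos by (simp add: pQ' a'_eq)
  qed (simp add: hR)
  let ?PR = "PiM UNIV (\<lambda>_::nat. measure_pmf R)"
  have D: "distr (iid_patterns Q) ?PR (Yseq ob) = ?PR"
    unfolding iid_patterns_def by (rule Yseq_distr[OF hR a_def apos])
  have D': "distr (iid_patterns Q') ?PR (Yseq ob) = ?PR"
    unfolding iid_patterns_def by (rule Yseq_distr[OF hR' a'_def a'pos])
  have Ym: "Yseq ob \<in> iid_patterns Q \<rightarrow>\<^sub>M ?PR" unfolding iid_patterns_def by (rule Yseq_meas)
  have Ym': "Yseq ob \<in> iid_patterns Q' \<rightarrow>\<^sub>M ?PR" unfolding iid_patterns_def by (rule Yseq_meas)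
  define G where "G y k = Nhat (cntl L (map y [0..<k])) / real k" for y k
  define l where "l = 1 / a'"
  let ?Pe = "\<lambda>y. \<forall>m. \<exists>K. \<forall>k\<ge>K. \<bar>Nhat (cntl L (map y [0..<k])) / real k - l\<bar> < 1 / real (Suc m)"
  have Pe_meas: "{y \<in> space ?PR. ?Pe y} \<in> sets ?PR" by measurable
  have obs_eq: "Nhat (obs_counts L \<omega> N) = Nhat (cntl L (map (Yseq ob \<omega>) [0..<cntO ob \<omega> N]))" for \<omega> N
    by (simp add: obs_counts_eq ob_def)
  have cons': "AE \<omega> in iid_patterns Q'. (\<lambda>N. Nhat (obs_counts L \<omega> N) / real N) \<longlonglongrightarrow> 1"
    using assms(2) pmQ' fiQ' unfolding consistent_for_def by blast
  have A: "AE \<omega> in iid_patterns Q'. ?Pe (Yseq ob \<omega>)"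
    using cons' slln_cnt[where Q=Q' and ob=ob]
  proof eventually_elim
    case (elim \<omega>)
    have "(\<lambda>k. Nhat (cntl L (map (Yseq ob \<omega>) [0..<k])) / real k) \<longlonglongrightarrow> 1 / a'"
    proof (rule inv_rate[where S = "cntO ob \<omega>"])
      show "cntO ob \<omega> 0 = 0" by simp
      show "\<And>N. cntO ob \<omega> (Suc N) \<le> Suc (cntO ob \<omega> N)" by (simp add: cntO_Suc)
      show "(\<lambda>N. real (cntO ob \<omega> N) / real N) \<longlonglongrightarrow> a'" using elim(2) by (simp add: a'_def)
      show "a' > 0" by (rule a'pos)
      show "(\<lambda>N. Nhat (cntl L (map (Yseq ob \<omega>) [0..<cntO ob \<omega> N])) / real N) \<longlonglongrightarrow> 1"
        using elim(1) by (simp add: obs_eq)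
    qed
    then show ?case
    proof (intro allI)
      fix m
      assume t: "(\<lambda>k. Nhat (cntl L (map (Yseq ob \<omega>) [0..<k])) / real k) \<longlonglongrightarrow> 1 / a'"
      show "\<exists>K. \<forall>k\<ge>K. \<bar>Nhat (cntl L (map (Yseq ob \<omega>) [0..<k])) / real k - l\<bar> < 1 / real (Suc m)"
        using LIMSEQ_D[OF t, of "1 / real (Suc m)"] by (simp add: l_def)
    qed
  qed
  have "AE y in distr (iid_patterns Q') ?PR (Yseq ob). ?Pe y"
    using A by (subst AE_distr_iff[OF Ym' Pe_meas])
  then have "AE y in ?PR. ?Pe y" unfolding D' .
  then have "AE y in distr (iid_patterns Q) ?PR (Yseq ob). ?Pe y" unfolding D .
  then have B: "AE \<omega> in iid_patterns Q. ?Pe (Yseq ob \<omega>)"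
    by (subst (asm) AE_distr_iff[OF Ym Pe_meas])
  show ?thesis
    using B slln_cnt[where Q=Q and ob=ob]
  proof eventually_elim
    case (elim \<omega>)
    have t: "(\<lambda>k. Nhat (cntl L (map (Yseq ob \<omega>) [0..<k])) / real k) \<longlonglongrightarrow> l"
    proof (rule tendsto_of_eps)
      fix m
      from elim(1) obtain K where "\<forall>k\<ge>K. \<bar>Nhat (cntl L (map (Yseq ob \<omega>) [0..<k])) / real k - l\<bar> < 1 / real (Suc m)"
        by blast
      then show "eventually (\<lambda>k. \<bar>Nhat (cntl L (map (Yseq ob \<omega>) [0..<k])) / real k - l\<bar> < 1 / real (Suc m)) sequentially"
        unfolding eventually_sequentially by blast
    qed
    have lim: "(\<lambda>N. real (cntO ob \<omega> N) / real N) \<longlonglongrightarrow> a" using elim(2) by (simp add: a_def)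
    have "(\<lambda>N. Nhat (cntl L (map (Yseq ob \<omega>) [0..<cntO ob \<omega> N])) / real N) \<longlonglongrightarrow> l * a"
      by (rule comp_rate[OF lim apos t])
    then have "(\<lambda>N. Nhat (obs_counts L \<omega> N) / real N) \<longlonglongrightarrow> l * a"
      by (simp add: obs_eq)
    then have t2: "(\<lambda>N. Nhat (obs_counts L \<omega> N) / real N - 1) \<longlonglongrightarrow> l * a - 1"
      by (intro tendsto_intros)
    have val: "l * a - 1 = pmf Q (zero_pattern L) * (exp (full_interaction L Q) - 1)"
    proof -
      have "l * a = 1 / c" using apos cpos by (simp add: l_def a'_eq)
      also have "\<dots> = 1 - p0 + p0 * exp \<gamma>"
        using p0lt p0pos by (simp add: c_def)
      finally show ?thesis by (simp add: p0_def z_def \<gamma>_def algebra_simps)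
    qed
    have ev: "eventually (\<lambda>N. Nhat (obs_counts L \<omega> N) / real N - 1 = (Nhat (obs_counts L \<omega> N) - real N) / real N) sequentially"
      using eventually_gt_at_top[of 0] by eventually_elim (simp add: diff_divide_distrib)
    have "(\<lambda>N. (Nhat (obs_counts L \<omega> N) - real N) / real N) \<longlonglongrightarrow> l * a - 1"
      by (rule Lim_transform_eventually[OF t2 ev])
    then show ?case unfolding val .
  qed
qed

end
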